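(* Let $m\ge 1$. Any product two-action game with $m$ players whose characteristic tuple is $(\underline v,\sigma^1,\dots,\sigma^m)=((0,\dots,0),\delta^1,\dots,\delta^m)$ is maximal; that is, for every $\pi\in S_m\setminus\mathrm{Der}_m$, exactly half of the elements of $EC(\pi)$ are Nash equilibria. (Such games exist for every $m$: choose $v_i=0$ and numbers $a^i_j\in(0,1)$ ordered according to $\delta^j$, and e.g. $U^i(s^i_0,\cdot)=0$, with $V^i$ the multilinear map $\gamma^i\prod_{j\neq i}(\gamma^j-a^i_j)$.)
   Context: Fix an integer $m\ge 1$ and $\mathcal A=\{1,\dots,m\}$. A two-action game is a finite game in normal form with player set $\mathcal A$ in which each player $i$ has exactly two pure strategies $s^i_0,s^i_1$, together with utility functions $U^i:S\to\mathbb R$, where $S=\prod_{i\in\mathcal A}\{s^i_0,s^i_1\}$. A mixed strategy combination is identified with $\underline\gamma=(\gamma^1,\dots,\gamma^m)\in[0,1]^m$, where $\gamma^i$ is the probability with which player $i$ plays $s^i_1$. The expected utility $V^i$ is the multilinear extension $V^i(\underline\gamma)=\sum_{(j_1,\dots,j_m)\in\{0,1\}^m}\prod_{k=1}^m p_k(j_k)\,U^i(s^1_{j_1},\dots,s^m_{j_m})$ with $p_k(1)=\gamma^k$, $p_k(0)=1-\gamma^k$. Write $\underline\gamma^{-i}=(\gamma^j)_{j\ne i}$ and $\lambda^i(\underline\gamma^{-i}):=V^i(\underline\gamma)|_{\gamma^i=1}-V^i(\underline\gamma)|_{\gamma^i=0}$. A Nash equilibrium is a point $\underline\gamma\in[0,1]^m$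 such that for every $i$: $\lambda^i(\underline\gamma^{-i})=0$ if $0<\gamma^i<1$; $\lambda^i(\underline\gamma^{-i})\le 0$ if $\gamma^i=0$; $\lambda^i(\underline\gamma^{-i})\ge 0$ if $\gamma^i=1$. For $\underline\gamma$ put $L(\underline\gamma)=\{i:\gamma^i\in\{0,1\}\}$. A two-action game is a product two-action game if there exist $\underline v=(v_1,\dots,v_m)\in\{0,1\}^m$ and numbers $a^i_j\in(0,1)$ for $i,j\in\mathcal A$, $i\ne j$, with $a^{i_1}_j\neq a^{i_2}_j$ whenever $i_1\neq i_2$ and both differ from $j$, such that $\lambda^i(\underline\gamma^{-i})=(-1)^{v_i}\prod_{j\in\mathcal A\setminus\{i\}}(\gamma^j-a^i_j)$ for every $i\in\mathcal A$. For $j\in\mathcal A$ the $j$-th associated permutation $\sigma^j\in S_m$ is the unique permutation with $\sigma^j(j)=j$ such that for $i,i'\in\mathcal A\setminus\{j\}$ one has $\sigma^j(i)<\sigma^j(i')$ iff $a^i_j>a^{i'}_j$. The tuple $(\underline v,\sigma^1,\dots,\sigma^m)$ is the characteristic tuple. For $\pi\in S_m$, $F(\pi)=\{i:\pi(i)=i\}$; $\mathrm{Der}_m=\{\pi\in S_m: F(\pi)=\emptyset\}$; $EC(\pi):=\{\underline\gamma\in[0,1]^m \mid L(\underline\gamma)=F(\pi),\ \gamma^j=a^{\pi(j)}_j \text{ for all } j\notin F(\pi)\}$. A product two-action game is maximal if for every $\pi\in S_m\setminus\mathrm{Der}_m$ exactly half of the elements of $EC(\pi)$ are Nash equilibria.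 For $j\in\mathcal A$, $\delta^j\in S_m$ is the unique permutation with $\delta^j(j)=j$ such that for all $k_1<k_2$ in $\mathcal A\setminus\{j\}$ one has $\delta^j(k_1)>\delta^j(k_2)$ iff $k_1<j<k_2$. *)

theory Defs
  imports "HOL-Library.FuncSet" "HOL-Combinatorics.Permutations" Complex_Main
begin

text \<open>Pure profiles are extensional maps from {1..m} to {0,1}
 (0 means strategy s_0, 1 means s_1).\<close>

definition pure_profiles :: "nat \<Rightarrow> (nat \<Rightarrow> nat) set" where
  "pure_profiles m = PiE {1..m} (\<lambda>_. {0, 1})"

definition mixed_space :: "nat \<Rightarrow> (nat \<Rightarrow> real) set" where
  "mixed_space m = PiE {1..m} (\<lambda>_. {0..1})"

definition exp_util :: "nat \<Rightarrow> (nat \<Rightarrow> (nat \<Rightarrow> nat) \<Rightarrow> real) \<Rightarrow> nat \<Rightarrow> (nat \<Rightarrow> real) \<Rightarrow> real" where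
  "exp_util m U i \<gamma> =
     (\<Sum>s\<in>pure_profiles m. (\<Prod>k\<in>{1..m}. (if s k = 1 then \<gamma> k else 1 - \<gamma> k)) * U i s)"

definition lam :: "nat \<Rightarrow> (nat \<Rightarrow> (nat \<Rightarrow> nat) \<Rightarrow> real) \<Rightarrow> nat \<Rightarrow> (nat \<Rightarrow> real) \<Rightarrow> real" where
  "lam m U i \<gamma> = exp_util m U i (\<gamma>(i := 1)) - exp_util m U i (\<gamma>(i := 0))"

definition nash_eq :: "nat \<Rightarrow> (nat \<Rightarrow> (nat \<Rightarrow> nat) \<Rightarrow> real) \<Rightarrow> (nat \<Rightarrow> real) \<Rightarrow> bool" where
  "nash_eq m U \<gamma> \<longleftrightarrow> \<gamma> \<in> mixed_space m \<and>
     (\<forall>i\<in>{1..m}.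
        (0 < \<gamma> i \<and> \<gamma> i < 1 \<longrightarrow> lam m U i \<gamma> = 0) \<and>
        (\<gamma> i = 0 \<longrightarrow> lam m U i \<gamma> \<le> 0) \<and>
        (\<gamma> i = 1 \<longrightarrow> lam m U i \<gamma> \<ge> 0))"

definition Lset :: "nat \<Rightarrow> (nat \<Rightarrow> real) \<Rightarrow> nat set" where
  "Lset m \<gamma> = {i\<in>{1..m}. \<gamma> i = 0 \<or> \<gamma> i = 1}"

text \<open>Product two-action game with data v (v i \<in> {0,1}) and a (a i j = a^i_j).\<close>
definition product_game ::
  "nat \<Rightarrow> (nat \<Rightarrow> (nat \<Rightarrow> nat) \<Rightarrow> real) \<Rightarrow> (nat \<Rightarrow> nat) \<Rightarrow> (nat \<Rightarrow> nat \<Rightarrow> real) \<Rightarrow> bool" where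
  "product_game m U v a \<longleftrightarrow>
     (\<forall>i\<in>{1..m}. v i \<in> {0, 1}) \<and>
     (\<forall>i\<in>{1..m}. \<forall>j\<in>{1..m}. i \<noteq> j \<longrightarrow> 0 < a i j \<and> a i j < 1) \<and>
     (\<forall>j\<in>{1..m}. \<forall>i1\<in>{1..m}. \<forall>i2\<in>{1..m}.
        i1 \<noteq> i2 \<and> i1 \<noteq> j \<and> i2 \<noteq> j \<longrightarrow> a i1 j \<noteq> a i2 j) \<and>
     (\<forall>i\<in>{1..m}. \<forall>\<gamma>\<in>mixed_space m.
        lam m U i \<gamma> = (-1) ^ v i * (\<Prod>j\<in>{1..m} - {i}. \<gamma> j - a i j))"

definition assoc_perm :: "nat \<Rightarrow> (nat \<Rightarrow> nat \<Rightarrow> real) \<Rightarrow> nat \<Rightarrow> (nat \<Rightarrow> nat)" where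
  "assoc_perm m a j = (THE \<sigma>. \<sigma> permutes {1..m} \<and> \<sigma> j = j \<and>
     (\<forall>i\<in>{1..m} - {j}. \<forall>i'\<in>{1..m} - {j}. \<sigma> i < \<sigma> i' \<longleftrightarrow> a i j > a i' j))"

definition delta_perm :: "nat \<Rightarrow> nat \<Rightarrow> (nat \<Rightarrow> nat)" where
  "delta_perm m j = (THE \<delta>. \<delta> permutes {1..m} \<and> \<delta> j = j \<and>
     (\<forall>k1\<in>{1..m} - {j}. \<forall>k2\<in>{1..m} - {j}. k1 < k2 \<longrightarrow>
        (\<delta> k1 > \<delta> k2 \<longleftrightarrow> k1 < j \<and> j < k2)))"

definition fixpts :: "nat \<Rightarrow> (nat \<Rightarrow> nat) \<Rightarrow> nat set" where
  "fixpts m \<pi> = {i\<in>{1..m}. \<pi> i = i}"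

definition EC :: "nat \<Rightarrow> (nat \<Rightarrow> nat \<Rightarrow> real) \<Rightarrow> (nat \<Rightarrow> nat) \<Rightarrow> (nat \<Rightarrow> real) set" where
  "EC m a \<pi> = {\<gamma>\<in>mixed_space m. Lset m \<gamma> = fixpts m \<pi> \<and>
      (\<forall>j\<in>{1..m} - fixpts m \<pi>. \<gamma> j = a (\<pi> j) j)}"

definition maximal :: "nat \<Rightarrow> (nat \<Rightarrow> (nat \<Rightarrow> nat) \<Rightarrow> real) \<Rightarrow> (nat \<Rightarrow> nat \<Rightarrow> real) \<Rightarrow> bool" where
  "maximal m U a \<longleftrightarrow>
     (\<forall>\<pi>. \<pi> permutes {1..m} \<and> fixpts m \<pi> \<noteq> {} \<longrightarrow>
        2 * card {\<gamma>\<in>EC m a \<pi>. nash_eq m U \<gamma>} = card (EC m a \<pi>))"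

end

theory Submission
  imports Defs
begin


lemma rank_lemma:
  fixes g :: "nat \<Rightarrow> 'b::linorder"
  assumes S: "finite S" and inj: "inj_on g S"
  shows "\<forall>x\<in>S. \<forall>y\<in>S. card {z\<in>S. g z < g x} < card {z\<in>S. g z < g y} \<longleftrightarrow> g x < g y"
    and "bij_betw (\<lambda>x. card {z\<in>S. g z < g x}) S {..<card S}"
proof -
  have mono: "card {z\<in>S. g z < g x} < card {z\<in>S. g z < g y}" if "x\<in>S" "y\<in>S" "g x < g y" for x y
  proof (rule psubset_card_mono)
    show "finite {z\<in>S. g z < g y}" using S by simp
    show "{z\<in>S. g z < g x} \<subset> {z\<in>S. g z < g y}" using that by auto
  qed
  show A: "\<forall>x\<in>S. \<forall>y\<in>S. card {z\<in>S. g z < g x} < card {z\<in>S. g z < g y} \<longleftrightarrow> g x < g y"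
  proof (intro ballI iffI)
    fix x y assume xy: "x\<in>S" "y\<in>S" "card {z\<in>S. g z < g x} < card {z\<in>S. g z < g y}"
    show "g x < g y"
    proof (rule ccontr)
      assume "\<not> g x < g y"
      then have "g y < g x \<or> g y = g x" by auto
      then show False
      proof
        assume "g y < g x" then show False using mono[of y x] xy by auto
      next
        assume "g y = g x" then have "x = y" using inj xy inj_onD by metis
        then show False using xy by simp
      qed
    qed
  qed (rule mono)
  have inj2: "inj_on (\<lambda>x. card {z\<in>S. g z < g x}) S"
  proof (rule inj_onI)
    fix x y assume xy: "x\<in>S" "y\<in>S" "card {z\<in>S. g z < g x} = card {z\<in>S. g z < g y}"
    show "x = y"
    proof (rule ccontr)
      assume "x \<noteq> y" then have "g x \<noteq> g y" using inj xy inj_onD by metis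
      then have "g x < g y \<or> g y < g x" by auto
      then show False using mono[of x y] mono[of y x] xy by auto
    qed
  qed
  have sub: "(\<lambda>x. card {z\<in>S. g z < g x}) ` S \<subseteq> {..<card S}"
  proof
    fix n assume "n \<in> (\<lambda>x. card {z\<in>S. g z < g x}) ` S"
    then obtain x where x: "x\<in>S" "n = card {z\<in>S. g z < g x}" by auto
    have "{z\<in>S. g z < g x} \<subset> S" using x by auto
    then have "card {z\<in>S. g z < g x} < card S" using S psubset_card_mono by blast
    then show "n \<in> {..<card S}" using x by simp
  qed
  have "card ((\<lambda>x. card {z\<in>S. g z < g x}) ` S) = card {..<card S}"
    using card_image[OF inj2] by simp
  then have "(\<lambda>x. card {z\<in>S. g z < g x}) ` S = {..<card S}"
    using card_subset_eq[OF _ sub] by simp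
  then show "bij_betw (\<lambda>x. card {z\<in>S. g z < g x}) S {..<card S}"
    using inj2 by (simp add: bij_betw_def)
qed

lemma perm_ex1:
  fixes g :: "nat \<Rightarrow> 'b::linorder"
  assumes T: "finite T" and j: "j \<in> T" and inj: "inj_on g (T - {j})"
  shows "\<exists>!\<sigma>. \<sigma> permutes T \<and> \<sigma> j = j \<and> (\<forall>x\<in>T-{j}. \<forall>y\<in>T-{j}. \<sigma> x < \<sigma> y \<longleftrightarrow> g x < g y)"
proof -
  define S where "S = T - {j}"
  have S: "finite S" using T S_def by simp
  define rg where "rg x = card {z\<in>S. g z < g x}" for x
  define ri where "ri x = card {z\<in>S. z < x}" for x :: nat
  have rg1: "\<forall>x\<in>S. \<forall>y\<in>S. rg x < rg y \<longleftrightarrow> g x < g y" and rg2: "bij_betw rg S {..<card S}"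
    using rank_lemma[OF S inj[folded S_def]] unfolding rg_def by blast+
  have ri1: "\<forall>x\<in>S. \<forall>y\<in>S. ri x < ri y \<longleftrightarrow> x < y" and ri2: "bij_betw ri S {..<card S}"
    using rank_lemma[OF S, of "\<lambda>x. x"] unfolding ri_def by auto
  have riinj: "inj_on ri S" using ri2 bij_betw_def by blast
  define \<sigma> where "\<sigma> x = (if x \<in> S then inv_into S ri (rg x) else x)" for x
  have bijinv: "bij_betw (inv_into S ri) {..<card S} S" using bij_betw_inv_into[OF ri2] .
  have "bij_betw (inv_into S ri \<circ> rg) S S" using bij_betw_trans[OF rg2 bijinv] .
  moreover have "bij_betw \<sigma> S S = bij_betw (inv_into S ri \<circ> rg) S S"
    by (rule bij_betw_cong) (simp add: \<sigma>_def)
  ultimately have bs: "bij_betw \<sigma> S S" by simp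
  have pS: "\<sigma> permutes S" by (rule bij_imp_permutes[OF bs]) (simp add: \<sigma>_def)
  have pT: "\<sigma> permutes T" using permutes_subset[OF pS] S_def by blast
  have sj: "\<sigma> j = j" by (simp add: \<sigma>_def S_def)
  have riS: "ri (\<sigma> x) = rg x" "\<sigma> x \<in> S" if "x \<in> S" for x
  proof -
    have "rg x \<in> ri ` S" using rg2 ri2 that by (auto simp: bij_betw_def)
    then show "ri (\<sigma> x) = rg x" using that by (simp add: \<sigma>_def f_inv_into_f)
    show "\<sigma> x \<in> S" using bs that bij_betwE by blast
  qed
  have ordS: "\<forall>x\<in>S. \<forall>y\<in>S. \<sigma> x < \<sigma> y \<longleftrightarrow> g x < g y"
    using ri1 rg1 riS by metis
  show ?thesis
  proof (rule ex1I[of _ \<sigma>])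
    show "\<sigma> permutes T \<and> \<sigma> j = j \<and> (\<forall>x\<in>T-{j}. \<forall>y\<in>T-{j}. \<sigma> x < \<sigma> y \<longleftrightarrow> g x < g y)"
      using pT sj ordS S_def by simp
  next
    fix \<tau> assume H: "\<tau> permutes T \<and> \<tau> j = j \<and> (\<forall>x\<in>T-{j}. \<forall>y\<in>T-{j}. \<tau> x < \<tau> y \<longleftrightarrow> g x < g y)"
    have tinj: "inj \<tau>" using H permutes_inj by blast
    have "\<tau> ` T = T" using H permutes_image by blast
    then have tS: "\<tau> ` S = S" using H tinj S_def by (simp add: image_set_diff)
    show "\<tau> = \<sigma>"
    proof
      fix x show "\<tau> x = \<sigma> x"
      proof (cases "x \<in> S")
        case False
        then have "x \<notin> T \<or> x = j" using S_def by auto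
        then show ?thesis using H False sj permutes_not_in by (auto simp: \<sigma>_def)
      next
        case True
        have "{z\<in>S. z < \<tau> x} = \<tau> ` {y\<in>S. \<tau> y < \<tau> x}" using tS by auto
        then have "ri (\<tau> x) = card (\<tau> ` {y\<in>S. \<tau> y < \<tau> x})" by (simp add: ri_def)
        also have "\<dots> = card {y\<in>S. \<tau> y < \<tau> x}" using tinj by (simp add: card_image inj_on_subset)
        also have "{y\<in>S. \<tau> y < \<tau> x} = {y\<in>S. g y < g x}" using H True unfolding S_def by auto
        also have "card {y\<in>S. g y < g x} = ri (\<sigma> x)" using riS True rg_def by simp
        finally have e: "ri (\<tau> x) = ri (\<sigma> x)" .
        have "\<tau> x \<in> S" using tS True by blast
        then show ?thesis using inj_onD[OF riinj e] riS(2)[OF True] by blast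
      qed
    qed
  qed
qed



definition dd :: "nat \<Rightarrow> nat \<Rightarrow> nat \<Rightarrow> int" where
  "dd m j x = (int x - int j) mod int m"

lemma dd_val:
  assumes "x \<in> {1..m}" "j \<in> {1..m}"
  shows "dd m j x = (if j \<le> x then int x - int j else int x - int j + int m)"
proof (cases "j \<le> x")
  case True
  then show ?thesis using assms by (simp add: dd_def mod_pos_pos_trivial)
next
  case False
  have "(int x - int j + int m) mod int m = int x - int j + int m"
    using assms False by (intro mod_pos_pos_trivial) auto
  then show ?thesis using False by (simp add: dd_def)
qed

lemma dd_rel:
  assumes "j \<in> {1..m}" "k1 \<in> {1..m}-{j}" "k2 \<in> {1..m}-{j}" "k1 < k2"
  shows "dd m j k2 < dd m j k1 \<longleftrightarrow> k1 < j \<and> j < k2"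
  using assms by (auto simp: dd_val)

lemma dd_inj:
  assumes "j \<in> {1..m}"
  shows "inj_on (dd m j) ({1..m}-{j})"
proof (rule inj_onI)
  fix x y assume "x \<in> {1..m}-{j}" "y \<in> {1..m}-{j}" "dd m j x = dd m j y"
  then show "x = y" using assms by (auto simp: dd_val split: if_splits)
qed

lemma sign_prod:
  fixes f :: "nat \<Rightarrow> real"
  assumes "finite K" "\<forall>k\<in>K. f k \<noteq> 0"
  shows "0 < (\<Prod>k\<in>K. f k) \<longleftrightarrow> even (card {k\<in>K. f k < 0})"
  using assms
proof (induction K rule: finite_induct)
  case empty then show ?case by simp
next
  case (insert x K)
  have c: "{k\<in>insert x K. f k < 0} = (if f x < 0 then insert x {k\<in>K. f k < 0} else {k\<in>K. f k < 0})"
    by auto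
  have fin: "finite {k\<in>K. f k < 0}" using insert by simp
  have xn: "x \<notin> {k\<in>K. f k < 0}" using insert by simp
  have nz: "(\<Prod>k\<in>K. f k) \<noteq> 0" using insert by simp
  have fx: "f x \<noteq> 0" using insert by simp
  have nz2: "(\<Prod>k\<in>K. f k) < 0 \<or> 0 < (\<Prod>k\<in>K. f k)" using nz by auto
  show ?case
    using insert c fin xn nz2 fx
    by (cases "f x < 0") (auto simp: zero_less_mult_iff card_insert_if linorder_neq_iff)
qed

lemma delta_prop:
  assumes j: "j \<in> {1..m}"
  shows "delta_perm m j permutes {1..m} \<and> delta_perm m j j = j \<and>
    (\<forall>x\<in>{1..m}-{j}. \<forall>y\<in>{1..m}-{j}. delta_perm m j x < delta_perm m j y \<longleftrightarrow> dd m j x < dd m j y)"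
proof -
  let ?P = "\<lambda>\<delta>. \<delta> permutes {1..m} \<and> \<delta> j = j \<and>
     (\<forall>k1\<in>{1..m} - {j}. \<forall>k2\<in>{1..m} - {j}. k1 < k2 \<longrightarrow>
        (\<delta> k1 > \<delta> k2 \<longleftrightarrow> k1 < j \<and> j < k2))"
  let ?Q = "\<lambda>\<delta>. \<delta> permutes {1..m} \<and> \<delta> j = j \<and>
    (\<forall>x\<in>{1..m}-{j}. \<forall>y\<in>{1..m}-{j}. \<delta> x < \<delta> y \<longleftrightarrow> dd m j x < dd m j y)"
  have eq: "?P \<delta> \<longleftrightarrow> ?Q \<delta>" for \<delta>
  proof
    assume P: "?P \<delta>"
    have inj: "inj \<delta>" using P permutes_inj by blast
    have "\<delta> x < \<delta> y \<longleftrightarrow> dd m j x < dd m j y" if xy: "x\<in>{1..m}-{j}" "y\<in>{1..m}-{j}" for x y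
    proof -
      consider "x < y" | "x = y" | "y < x" by arith
      then show ?thesis
      proof cases
        case 1
        have "\<delta> x \<noteq> \<delta> y" using inj 1 by (metis less_irrefl injD)
        moreover have "dd m j x \<noteq> dd m j y" using dd_inj[OF j] xy 1 by (metis less_irrefl inj_onD)
        moreover have "\<delta> y < \<delta> x \<longleftrightarrow> x < j \<and> j < y" using P xy 1 by blast
        ultimately show ?thesis using dd_rel[OF j xy 1] by auto
      next
        case 2 then show ?thesis by simp
      next
        case 3
        have "\<delta> x < \<delta> y \<longleftrightarrow> y < j \<and> j < x" using P xy 3 by blast
        then show ?thesis using dd_rel[OF j xy(2,1) 3] by simp
      qed
    qed
    then show "?Q \<delta>" using P by blast
  next
    assume Q: "?Q \<delta>"
    show "?P \<delta>" using Q dd_rel[OF j] by blast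
  qed
  have "\<exists>!\<delta>. ?Q \<delta>" using perm_ex1[of "{1..m}" j "dd m j"] dd_inj[OF j] j by simp
  then have "\<exists>!\<delta>. ?P \<delta>" using eq by simp
  then have "?P (delta_perm m j)" unfolding delta_perm_def by (rule theI')
  then show ?thesis using eq by blast
qed

lemma assoc_prop:
  assumes j: "j \<in> {1..m}" and dist: "\<forall>i1\<in>{1..m}. \<forall>i2\<in>{1..m}. i1 \<noteq> i2 \<and> i1 \<noteq> j \<and> i2 \<noteq> j \<longrightarrow> a i1 j \<noteq> a i2 j"
  shows "\<forall>i\<in>{1..m} - {j}. \<forall>i'\<in>{1..m} - {j}. assoc_perm m a j i < assoc_perm m a j i' \<longleftrightarrow> a i j > a i' j"
proof -
  have inj: "inj_on (\<lambda>i. - a i j) ({1..m}-{j})"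
  proof (rule inj_onI)
    fix x y assume xy: "x \<in> {1..m}-{j}" "y \<in> {1..m}-{j}" "- a x j = - a y j"
    show "x = y"
    proof (rule ccontr)
      assume "x \<noteq> y"
      then have "a x j \<noteq> a y j" using dist xy(1,2) by blast
      then show False using xy(3) by simp
    qed
  qed
  have "\<exists>!\<sigma>. \<sigma> permutes {1..m} \<and> \<sigma> j = j \<and>
     (\<forall>i\<in>{1..m} - {j}. \<forall>i'\<in>{1..m} - {j}. \<sigma> i < \<sigma> i' \<longleftrightarrow> a i j > a i' j)"
    using perm_ex1[OF _ j inj] by simp
  then have "assoc_perm m a j permutes {1..m} \<and> assoc_perm m a j j = j \<and>
     (\<forall>i\<in>{1..m} - {j}. \<forall>i'\<in>{1..m} - {j}. assoc_perm m a j i < assoc_perm m a j i' \<longleftrightarrow> a i j > a i' j)"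
    unfolding assoc_perm_def by (rule theI')
  then show ?thesis by blast
qed



lemma card_as_sum: "finite A \<Longrightarrow> card {k\<in>A. P k} = (\<Sum>k\<in>A. (of_bool (P k) :: nat))"
  by (simp add: Collect_conj_eq Int_commute Collect_mem_eq)

lemma G_step:
  fixes \<pi> :: "nat \<Rightarrow> nat" and t :: int
  assumes perm: "\<pi> permutes {1..m}"
  shows "card {k\<in>{k\<in>{1..m}. \<pi> k \<noteq> k}. (t + 1 - int k) mod int m < dd m k (\<pi> k)}
       = card {k\<in>{k\<in>{1..m}. \<pi> k \<noteq> k}. (t - int k) mod int m < dd m k (\<pi> k)}"
proof -
  define N where "N = {k\<in>{1..m}. \<pi> k \<noteq> k}"
  have finN: "finite N" by (simp add: N_def)
  have inj: "inj \<pi>" using permutes_inj[OF perm] .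
  have pin: "\<pi> k \<in> {1..m}" if "k \<in> {1..m}" for k using that permutes_in_image[OF perm, of k] by blast
  have piN: "\<pi> k \<in> N" if "k \<in> N" for k
  proof -
    have nk: "\<pi> k \<noteq> k" using that N_def by simp
    have "\<pi> (\<pi> k) \<noteq> \<pi> k"
    proof
      assume "\<pi> (\<pi> k) = \<pi> k"
      then have "\<pi> k = k" using injD[OF inj] by blast
      then show False using nk by simp
    qed
    then show ?thesis using that pin N_def by auto
  qed
  have bij: "bij_betw \<pi> N N"
  proof (rule bij_betw_imageI)
    show "inj_on \<pi> N" using inj inj_on_subset by blast
    show "\<pi> ` N = N"
    proof
      show "\<pi> ` N \<subseteq> N" using piN by blast
      show "N \<subseteq> \<pi> ` N"
      proof
        fix k assume k: "k \<in> N"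
        define k' where "k' = inv \<pi> k"
        have e: "\<pi> k' = k" using permutes_inverses(1)[OF perm] k'_def by blast
        have pinv: "inv \<pi> permutes {1..m}" using permutes_inv[OF perm] .
        have "k \<in> {1..m}" using k N_def by simp
        then have "k' \<in> {1..m}" using permutes_in_image[OF pinv, of k] k'_def by blast
        moreover have "\<pi> k' \<noteq> k'" using e k N_def by auto
        ultimately have "k' \<in> N" using N_def by simp
        then show "k \<in> \<pi> ` N" using e by force
      qed
    qed
  qed
  have mpos: "int m > 0" if "N \<noteq> {}" using that N_def by auto
  have pw: "(of_bool ((t + 1 - int k) mod int m < dd m k (\<pi> k)) :: nat)
      + of_bool ((t+1) mod int m = int (\<pi> k) mod int m)
    = of_bool ((t - int k) mod int m < dd m k (\<pi> k)) + of_bool ((t+1) mod int m = int k mod int m)"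
    if k: "k \<in> N" for k
  proof -
    have km: "k \<in> {1..m}" "\<pi> k \<in> {1..m}" "\<pi> k \<noteq> k" using k N_def pin by auto
    define D where "D = dd m k (\<pi> k)"
    have D: "1 \<le> D" "D \<le> int m - 1" using km by (auto simp: D_def dd_val)
    define r where "r = (t - int k) mod int m"
    have mp: "int m > 0" using km by auto
    have r: "0 \<le> r" "r < int m" using mp by (simp_all add: r_def)
    have h1: "(t + 1 - int k) mod int m = (r + 1) mod int m"
    proof -
      have "(r + 1) mod int m = (t - int k + 1) mod int m" unfolding r_def by (rule mod_add_left_eq)
      then show ?thesis by (simp add: algebra_simps)
    qed
    have h2: "(t+1) mod int m = int (\<pi> k) mod int m \<longleftrightarrow> (t + 1 - int k) mod int m = D"
    proof -
      have "(t+1) mod int m = int (\<pi> k) mod int m \<longleftrightarrow> int m dvd (t+1) - int (\<pi> k)"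
        by (rule mod_eq_dvd_iff)
      moreover have "(t + 1 - int k) mod int m = (int (\<pi> k) - int k) mod int m \<longleftrightarrow> int m dvd (t + 1 - int k) - (int (\<pi> k) - int k)"
        by (rule mod_eq_dvd_iff)
      moreover have "(t + 1 - int k) - (int (\<pi> k) - int k) = (t+1) - int (\<pi> k)" by simp
      ultimately show ?thesis by (simp only: D_def dd_def)
    qed
    have h3: "(t+1) mod int m = int k mod int m \<longleftrightarrow> (t + 1 - int k) mod int m = 0"
      by (simp add: mod_eq_dvd_iff dvd_eq_mod_eq_0[symmetric])
    show ?thesis
    proof (cases "r + 1 < int m")
      case True
      then have "(r + 1) mod int m = r + 1" using r by (simp add: mod_pos_pos_trivial)
      then show ?thesis using h1 h2 h3 r D True unfolding D_def[symmetric] r_def[symmetric] by auto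
    next
      case False
      then have "r + 1 = int m" using r by simp
      then have "(r + 1) mod int m = 0" by simp
      then show ?thesis using h1 h2 h3 r D False unfolding D_def[symmetric] r_def[symmetric] by auto
    qed
  qed
  have s1: "(\<Sum>k\<in>N. (of_bool ((t+1) mod int m = int (\<pi> k) mod int m) :: nat))
      = (\<Sum>k\<in>N. of_bool ((t+1) mod int m = int k mod int m))"
    using sum.reindex_bij_betw[OF bij, of "\<lambda>k. (of_bool ((t+1) mod int m = int k mod int m) :: nat)"] by simp
  have "(\<Sum>k\<in>N. (of_bool ((t + 1 - int k) mod int m < dd m k (\<pi> k)) :: nat))
      + (\<Sum>k\<in>N. (of_bool ((t+1) mod int m = int (\<pi> k) mod int m) :: nat))
    = (\<Sum>k\<in>N. (of_bool ((t - int k) mod int m < dd m k (\<pi> k)) :: nat))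
      + (\<Sum>k\<in>N. (of_bool ((t+1) mod int m = int k mod int m) :: nat))"
    using pw by (simp add: sum.distrib[symmetric])
  then have "(\<Sum>k\<in>N. (of_bool ((t + 1 - int k) mod int m < dd m k (\<pi> k)) :: nat))
    = (\<Sum>k\<in>N. (of_bool ((t - int k) mod int m < dd m k (\<pi> k)) :: nat))"
    using s1 by simp
  then show ?thesis using card_as_sum[OF finN] unfolding N_def[symmetric] by simp
qed

lemma G_const:
  fixes \<pi> :: "nat \<Rightarrow> nat"
  assumes perm: "\<pi> permutes {1..m}"
  shows "card {k\<in>{k\<in>{1..m}. \<pi> k \<noteq> k}. dd m k i < dd m k (\<pi> k)}
       = card {k\<in>{k\<in>{1..m}. \<pi> k \<noteq> k}. dd m k i' < dd m k (\<pi> k)}"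
proof -
  have "card {k\<in>{k\<in>{1..m}. \<pi> k \<noteq> k}. (int n - int k) mod int m < dd m k (\<pi> k)}
     = card {k\<in>{k\<in>{1..m}. \<pi> k \<noteq> k}. (0 - int k) mod int m < dd m k (\<pi> k)}" for n
  proof (induction n)
    case 0 then show ?case by simp
  next
    case (Suc n)
    have e: "int (Suc n) = int n + 1" by simp
    show ?case unfolding e using trans[OF G_step[OF perm, of "int n"] Suc.IH] .
  qed
  from this[of i] this[of i'] show ?thesis by (simp add: dd_def)
qed



lemma main_count:
  fixes U :: "nat \<Rightarrow> (nat \<Rightarrow> nat) \<Rightarrow> real" and a :: "nat \<Rightarrow> nat \<Rightarrow> real"
  assumes perm: "\<pi> permutes {1..m}" and Fne: "fixpts m \<pi> \<noteq> {}"
  and ha: "\<forall>i\<in>{1..m}. \<forall>j\<in>{1..m}. i \<noteq> j \<longrightarrow> 0 < a i j \<and> a i j < 1"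
  and hdist: "\<forall>j\<in>{1..m}. \<forall>i1\<in>{1..m}. \<forall>i2\<in>{1..m}.
        i1 \<noteq> i2 \<and> i1 \<noteq> j \<and> i2 \<noteq> j \<longrightarrow> a i1 j \<noteq> a i2 j"
  and hlam0: "\<forall>i\<in>{1..m}. \<forall>\<gamma>\<in>mixed_space m. lam m U i \<gamma> = (\<Prod>j\<in>{1..m}-{i}. \<gamma> j - a i j)"
  and ord: "\<forall>j\<in>{1..m}. \<forall>x\<in>{1..m}-{j}. \<forall>y\<in>{1..m}-{j}. (a y j < a x j \<longleftrightarrow> dd m j x < dd m j y)"
  shows "2 * card {\<gamma>\<in>EC m a \<pi>. nash_eq m U \<gamma>} = card (EC m a \<pi>)"
proof -
  define F where "F = fixpts m \<pi>"
  define N where "N = {1..m} - F"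
  have Fd: "F = {i\<in>{1..m}. \<pi> i = i}" by (simp add: F_def fixpts_def)
  have Nd: "N = {k\<in>{1..m}. \<pi> k \<noteq> k}" by (auto simp: N_def Fd)
  have inj: "inj \<pi>" using permutes_inj[OF perm] .
  have pin: "\<pi> k \<in> {1..m}" if "k \<in> {1..m}" for k using that permutes_in_image[OF perm, of k] by blast
  obtain i0 where i0: "i0 \<in> F" using Fne F_def by blast
  define c where "c i = card {k\<in>N. a (\<pi> k) k < a i k}" for i
  have cconst: "c i = c i0" if i: "i \<in> F" for i
  proof -
    have "c i = card {k\<in>N. dd m k i < dd m k (\<pi> k)}" if i: "i \<in> F" for i
    proof -
      have "{k\<in>N. a (\<pi> k) k < a i k} = {k\<in>N. dd m k i < dd m k (\<pi> k)}"
      proof (rule Collect_cong)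
        fix k show "(k \<in> N \<and> a (\<pi> k) k < a i k) = (k \<in> N \<and> dd m k i < dd m k (\<pi> k))"
        proof (cases "k \<in> N")
          case True
          have k: "k \<in> {1..m}" "\<pi> k \<noteq> k" using True Nd by auto
          have "i \<in> {1..m} - {k}" using i k Fd by auto
          moreover have "\<pi> k \<in> {1..m} - {k}" using k pin by auto
          ultimately show ?thesis using ord k True by blast
        qed simp
      qed
      then show ?thesis by (simp add: c_def)
    qed
    then show ?thesis using i i0 G_const[OF perm, of i i0] unfolding Nd by simp
  qed
  define z where "z \<gamma> = card {k\<in>F. \<gamma> k = 0}" for \<gamma> :: "nat \<Rightarrow> real"
  have EC_iff: "\<gamma> \<in> EC m a \<pi> \<longleftrightarrow> \<gamma> \<in> mixed_space m \<and> Lset m \<gamma> = F \<and> (\<forall>j\<in>N. \<gamma> j = a (\<pi> j) j)" for \<gamma>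
    by (simp add: EC_def F_def N_def)
  have ECF: "\<gamma> i = 0 \<or> \<gamma> i = 1" if "\<gamma> \<in> EC m a \<pi>" "i \<in> F" for \<gamma> i
  proof -
    have "i \<in> Lset m \<gamma>" using that EC_iff by simp
    then show ?thesis by (simp add: Lset_def)
  qed
  have ECN: "\<gamma> j = a (\<pi> j) j" if "\<gamma> \<in> EC m a \<pi>" "j \<in> N" for \<gamma> j
    using that EC_iff by simp
  have aN: "0 < a (\<pi> j) j \<and> a (\<pi> j) j < 1" if "j \<in> N" for j
    using that ha pin Nd by auto
  have nash_iff: "nash_eq m U \<gamma> \<longleftrightarrow> even (z \<gamma> + c i0)" if g: "\<gamma> \<in> EC m a \<pi>" for \<gamma>
  proof -
    have mix: "\<gamma> \<in> mixed_space m" using g EC_iff by simp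
    have condN: "(0 < \<gamma> i \<and> \<gamma> i < 1 \<longrightarrow> lam m U i \<gamma> = 0) \<and>
        (\<gamma> i = 0 \<longrightarrow> lam m U i \<gamma> \<le> 0) \<and> (\<gamma> i = 1 \<longrightarrow> lam m U i \<gamma> \<ge> 0)" if i: "i \<in> N" for i
    proof -
      have gi: "0 < \<gamma> i \<and> \<gamma> i < 1" using ECN[OF g i] aN[OF i] by simp
      define k where "k = inv \<pi> i"
      have e: "\<pi> k = i" using permutes_inverses(1)[OF perm] k_def by blast
      have im: "i \<in> {1..m}" using i Nd by simp
      have km: "k \<in> {1..m}" using permutes_in_image[OF permutes_inv[OF perm], of i] im k_def by blast
      have ki: "k \<noteq> i" using e i Nd by auto
      have kN: "k \<in> N" using km ki e Nd by auto
      have "\<gamma> k - a i k = 0" using ECN[OF g kN] e by simp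
      then have "(\<Prod>j\<in>{1..m}-{i}. \<gamma> j - a i j) = 0"
        using km ki by (intro prod_zero) auto
      then have "lam m U i \<gamma> = 0" using hlam0 im mix by simp
      then show ?thesis using gi by simp
    qed
    have condF: "((0 < \<gamma> i \<and> \<gamma> i < 1 \<longrightarrow> lam m U i \<gamma> = 0) \<and>
        (\<gamma> i = 0 \<longrightarrow> lam m U i \<gamma> \<le> 0) \<and> (\<gamma> i = 1 \<longrightarrow> lam m U i \<gamma> \<ge> 0))
        \<longleftrightarrow> even (z \<gamma> + c i0)" if i: "i \<in> F" for i
    proof -
      have im: "i \<in> {1..m}" and pii: "\<pi> i = i" using i Fd by auto
      define P where "P = (\<Prod>j\<in>{1..m}-{i}. \<gamma> j - a i j)"
      have lP: "lam m U i \<gamma> = P" using hlam0 im mix P_def by simp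
      have nz: "\<forall>j\<in>{1..m}-{i}. \<gamma> j - a i j \<noteq> 0"
      proof
        fix j assume j: "j \<in> {1..m}-{i}"
        show "\<gamma> j - a i j \<noteq> 0"
        proof (cases "j \<in> F")
          case True
          then have "\<gamma> j = 0 \<or> \<gamma> j = 1" using ECF g by blast
          moreover have "0 < a i j \<and> a i j < 1" using ha im j by auto
          ultimately show ?thesis by auto
        next
          case False
          then have jN: "j \<in> N" using j N_def by auto
          have pj: "\<pi> j \<noteq> j" using jN Nd by auto
          have pji: "\<pi> j \<noteq> i"
          proof
            assume "\<pi> j = i" then have "\<pi> j = \<pi> i" using pii by simp
            then have "j = i" using injD[OF inj] by blast
            then show False using j by simp
          qed
          have "a (\<pi> j) j \<noteq> a i j" using hdist j pin[of j] im pj pji by auto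
          then show ?thesis using ECN[OF g jN] by simp
        qed
      qed
      have sgn: "0 < P \<longleftrightarrow> even (card {j\<in>{1..m}-{i}. \<gamma> j - a i j < 0})"
        unfolding P_def by (rule sign_prod) (use nz in auto)
      have Pnz: "P \<noteq> 0" unfolding P_def using nz by simp
      have negset: "{j\<in>{1..m}-{i}. \<gamma> j - a i j < 0} = {j\<in>F-{i}. \<gamma> j = 0} \<union> {k\<in>N. a (\<pi> k) k < a i k}"
      proof (rule set_eqI)
        fix j show "j \<in> {j\<in>{1..m}-{i}. \<gamma> j - a i j < 0} \<longleftrightarrow> j \<in> {j\<in>F-{i}. \<gamma> j = 0} \<union> {k\<in>N. a (\<pi> k) k < a i k}"
        proof (cases "j \<in> F")
          case True
          have jm: "j \<in> {1..m}" using True Fd by simp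
          have "\<gamma> j = 0 \<or> \<gamma> j = 1" using ECF g True by blast
          moreover have "j \<noteq> i \<Longrightarrow> 0 < a i j \<and> a i j < 1" using ha im jm by auto
          moreover have "j \<notin> N" using True N_def by simp
          ultimately show ?thesis using True jm by auto
        next
          case False
          show ?thesis
          proof (cases "j \<in> N")
            case True
            have "j \<noteq> i" using True i N_def by auto
            then show ?thesis using True False ECN[OF g True] N_def by auto
          next
            case False2: False
            then show ?thesis using False N_def by auto
          qed
        qed
      qed
      have disj: "{j\<in>F-{i}. \<gamma> j = 0} \<inter> {k\<in>N. a (\<pi> k) k < a i k} = {}" using N_def by auto
      have cardneg: "card {j\<in>{1..m}-{i}. \<gamma> j - a i j < 0} = card {j\<in>F-{i}. \<gamma> j = 0} + c i"
        unfolding negset c_def by (rule card_Un_disjoint) (use disj Fd N_def in auto)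
      have finF: "finite F" using Fd by simp
      have zF: "card {j\<in>F-{i}. \<gamma> j = 0} = (if \<gamma> i = 0 then z \<gamma> - 1 else z \<gamma>)"
      proof (cases "\<gamma> i = 0")
        case True
        have "{j\<in>F-{i}. \<gamma> j = 0} = {k\<in>F. \<gamma> k = 0} - {i}" by auto
        then show ?thesis using True i finF by (simp add: z_def card_Diff_singleton)
      next
        case False
        have "{j\<in>F-{i}. \<gamma> j = 0} = {k\<in>F. \<gamma> k = 0}" using False by auto
        then show ?thesis using False by (simp add: z_def)
      qed
      have zpos: "\<gamma> i = 0 \<Longrightarrow> z \<gamma> \<ge> 1"
      proof -
        assume "\<gamma> i = 0"
        then have "i \<in> {k\<in>F. \<gamma> k = 0}" using i by simp
        then have "{k\<in>F. \<gamma> k = 0} \<noteq> {}" by blast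
        then show "z \<gamma> \<ge> 1" using finF by (simp add: z_def Suc_le_eq card_gt_0_iff)
      qed
      have gi: "\<gamma> i = 0 \<or> \<gamma> i = 1" using ECF g i by blast
      have ci: "c i = c i0" using cconst i .
      show ?thesis
      proof (cases "\<gamma> i = 0")
        case True
        have "odd (z \<gamma> - 1 + c i0) \<longleftrightarrow> even (z \<gamma> + c i0)" using zpos[OF True]
          by (metis Suc_diff_1 add_Suc even_Suc less_le_trans zero_less_one)
        then show ?thesis using True sgn Pnz cardneg zF lP ci by auto
      next
        case False
        then have "\<gamma> i = 1" using gi by simp
        then show ?thesis using False sgn Pnz cardneg zF lP ci by auto
      qed
    qed
    have "nash_eq m U \<gamma> \<longleftrightarrow> (\<forall>i\<in>{1..m}. (0 < \<gamma> i \<and> \<gamma> i < 1 \<longrightarrow> lam m U i \<gamma> = 0) \<and>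
        (\<gamma> i = 0 \<longrightarrow> lam m U i \<gamma> \<le> 0) \<and> (\<gamma> i = 1 \<longrightarrow> lam m U i \<gamma> \<ge> 0))"
      using mix by (simp add: nash_eq_def)
    also have "\<dots> \<longleftrightarrow> even (z \<gamma> + c i0)"
    proof
      assume "\<forall>i\<in>{1..m}. (0 < \<gamma> i \<and> \<gamma> i < 1 \<longrightarrow> lam m U i \<gamma> = 0) \<and>
        (\<gamma> i = 0 \<longrightarrow> lam m U i \<gamma> \<le> 0) \<and> (\<gamma> i = 1 \<longrightarrow> lam m U i \<gamma> \<ge> 0)"
      then show "even (z \<gamma> + c i0)" using condF[OF i0] i0 Fd by blast
    next
      assume ev: "even (z \<gamma> + c i0)"
      show "\<forall>i\<in>{1..m}. (0 < \<gamma> i \<and> \<gamma> i < 1 \<longrightarrow> lam m U i \<gamma> = 0) \<and>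
        (\<gamma> i = 0 \<longrightarrow> lam m U i \<gamma> \<le> 0) \<and> (\<gamma> i = 1 \<longrightarrow> lam m U i \<gamma> \<ge> 0)"
      proof
        fix i assume im: "i \<in> {1..m}"
        show "(0 < \<gamma> i \<and> \<gamma> i < 1 \<longrightarrow> lam m U i \<gamma> = 0) \<and>
          (\<gamma> i = 0 \<longrightarrow> lam m U i \<gamma> \<le> 0) \<and> (\<gamma> i = 1 \<longrightarrow> lam m U i \<gamma> \<ge> 0)"
        proof (cases "i \<in> F")
          case True then show ?thesis using condF ev by blast
        next
          case False then have "i \<in> N" using im N_def by simp
          then show ?thesis using condN by blast
        qed
      qed
    qed
    finally show ?thesis .
  qed
  define \<phi> where "\<phi> \<gamma> = \<gamma>(i0 := 1 - \<gamma> i0)" for \<gamma> :: "nat \<Rightarrow> real"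
  have i0m: "i0 \<in> {1..m}" using i0 Fd by simp
  have phiphi: "\<phi> (\<phi> \<gamma>) = \<gamma>" for \<gamma> by (simp add: \<phi>_def)
  have phiEC: "\<phi> \<gamma> \<in> EC m a \<pi>" if g: "\<gamma> \<in> EC m a \<pi>" for \<gamma>
  proof -
    have g01: "\<gamma> i0 = 0 \<or> \<gamma> i0 = 1" using ECF g i0 by blast
    have mix: "\<gamma> \<in> mixed_space m" using g EC_iff by simp
    have "\<phi> \<gamma> \<in> mixed_space m" using mix g01 i0m
      by (auto simp: mixed_space_def \<phi>_def PiE_iff extensional_def)
    moreover have "Lset m (\<phi> \<gamma>) = Lset m \<gamma>" using g01 by (auto simp: Lset_def \<phi>_def)
    moreover have "\<forall>j\<in>N. \<phi> \<gamma> j = a (\<pi> j) j" using ECN[OF g] i0 N_def by (auto simp: \<phi>_def)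
    ultimately show ?thesis using g EC_iff by simp
  qed
  have zphi: "even (z (\<phi> \<gamma>) + c i0) \<longleftrightarrow> \<not> even (z \<gamma> + c i0)" if g: "\<gamma> \<in> EC m a \<pi>" for \<gamma>
  proof -
    have finF: "finite F" using Fd by simp
    have g01: "\<gamma> i0 = 0 \<or> \<gamma> i0 = 1" using ECF g i0 by blast
    then show ?thesis
    proof
      assume h: "\<gamma> i0 = 0"
      have "{k\<in>F. \<phi> \<gamma> k = 0} = {k\<in>F. \<gamma> k = 0} - {i0}" using h by (auto simp: \<phi>_def)
      moreover have "i0 \<in> {k\<in>F. \<gamma> k = 0}" using h i0 by simp
      moreover have fz: "finite {k\<in>F. \<gamma> k = 0}" using finF by simp
      ultimately have "z (\<phi> \<gamma>) = z \<gamma> - 1" "z \<gamma> > 0" unfolding z_def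
        by (simp_all add: card_Diff_singleton card_gt_0_iff) blast
      then have "z \<gamma> + c i0 = Suc (z (\<phi> \<gamma>) + c i0)" by simp
      then show ?thesis by simp
    next
      assume h: "\<gamma> i0 = 1"
      have "{k\<in>F. \<phi> \<gamma> k = 0} = insert i0 {k\<in>F. \<gamma> k = 0}" using h i0 by (auto simp: \<phi>_def)
      moreover have "i0 \<notin> {k\<in>F. \<gamma> k = 0}" using h by simp
      ultimately have "z (\<phi> \<gamma>) = z \<gamma> + 1" using finF unfolding z_def by simp
      then have "z (\<phi> \<gamma>) + c i0 = Suc (z \<gamma> + c i0)" by simp
      then show ?thesis by simp
    qed
  qed
  have finEC: "finite (EC m a \<pi>)"
  proof (rule finite_subset)
    show "EC m a \<pi> \<subseteq> PiE {1..m} (\<lambda>j. {0, 1, a (\<pi> j) j})"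
    proof
      fix \<gamma> assume g: "\<gamma> \<in> EC m a \<pi>"
      have mix: "\<gamma> \<in> mixed_space m" using g EC_iff by simp
      have "\<gamma> j \<in> {0, 1, a (\<pi> j) j}" if j: "j \<in> {1..m}" for j
      proof (cases "j \<in> F")
        case True then show ?thesis using ECF g by blast
      next
        case False then show ?thesis using ECN[OF g] j N_def by simp
      qed
      then show "\<gamma> \<in> PiE {1..m} (\<lambda>j. {0, 1, a (\<pi> j) j})" using mix
        by (auto simp: mixed_space_def PiE_iff)
    qed
    show "finite (PiE {1..m} (\<lambda>j. {0, 1, a (\<pi> j) j}))" by (rule finite_PiE) auto
  qed
  define A where "A = {\<gamma>\<in>EC m a \<pi>. nash_eq m U \<gamma>}"
  have phiA: "\<phi> ` A = EC m a \<pi> - A"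
  proof
    show "\<phi> ` A \<subseteq> EC m a \<pi> - A"
      using phiEC zphi nash_iff by (auto simp: A_def)
    show "EC m a \<pi> - A \<subseteq> \<phi> ` A"
    proof
      fix \<gamma> assume g: "\<gamma> \<in> EC m a \<pi> - A"
      have "\<phi> \<gamma> \<in> A" using g phiEC zphi nash_iff by (auto simp: A_def)
      then show "\<gamma> \<in> \<phi> ` A" using phiphi by (metis image_eqI)
    qed
  qed
  have injphi: "inj_on \<phi> A" by (metis inj_onI phiphi)
  have "card (EC m a \<pi>) = card A + card (EC m a \<pi> - A)"
    using finEC by (metis A_def card_Diff_subset finite_subset le_add_diff_inverse mem_Collect_eq subsetI card_mono)
  also have "card (EC m a \<pi> - A) = card A" using phiA card_image[OF injphi] by simp
  finally show ?thesis unfolding A_def by simp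
qed


theorem theorem4p4:
  fixes m :: nat and U :: "nat \<Rightarrow> (nat \<Rightarrow> nat) \<Rightarrow> real"
    and v :: "nat \<Rightarrow> nat" and a :: "nat \<Rightarrow> nat \<Rightarrow> real"
  assumes "m \<ge> 1"
    and "product_game m U v a"
    and "\<forall>i\<in>{1..m}. v i = 0"
    and "\<forall>j\<in>{1..m}. assoc_perm m a j = delta_perm m j"
  shows "maximal m U a"
proof -
  have ha: "\<forall>i\<in>{1..m}. \<forall>j\<in>{1..m}. i \<noteq> j \<longrightarrow> 0 < a i j \<and> a i j < 1"
    and hdist: "\<forall>j\<in>{1..m}. \<forall>i1\<in>{1..m}. \<forall>i2\<in>{1..m}.
        i1 \<noteq> i2 \<and> i1 \<noteq> j \<and> i2 \<noteq> j \<longrightarrow> a i1 j \<noteq> a i2 j"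
    and hlam: "\<forall>i\<in>{1..m}. \<forall>\<gamma>\<in>mixed_space m.
        lam m U i \<gamma> = (-1) ^ v i * (\<Prod>j\<in>{1..m} - {i}. \<gamma> j - a i j)"
    using assms(2) unfolding product_game_def by blast+
  have hlam0: "\<forall>i\<in>{1..m}. \<forall>\<gamma>\<in>mixed_space m. lam m U i \<gamma> = (\<Prod>j\<in>{1..m}-{i}. \<gamma> j - a i j)"
    using hlam assms(3) by simp
  have ord: "\<forall>j\<in>{1..m}. \<forall>x\<in>{1..m}-{j}. \<forall>y\<in>{1..m}-{j}. (a y j < a x j \<longleftrightarrow> dd m j x < dd m j y)"
  proof (intro ballI)
    fix j x y assume j: "j \<in> {1..m}" and x: "x \<in> {1..m}-{j}" and y: "y \<in> {1..m}-{j}"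
    have dj: "\<forall>i1\<in>{1..m}. \<forall>i2\<in>{1..m}. i1 \<noteq> i2 \<and> i1 \<noteq> j \<and> i2 \<noteq> j \<longrightarrow> a i1 j \<noteq> a i2 j"
      using hdist j by blast
    have "a y j < a x j \<longleftrightarrow> assoc_perm m a j x < assoc_perm m a j y"
      using assoc_prop[of j m a, OF j dj] x y by blast
    also have "\<dots> \<longleftrightarrow> delta_perm m j x < delta_perm m j y" using assms(4) j by simp
    also have "\<dots> \<longleftrightarrow> dd m j x < dd m j y" using delta_prop[OF j] x y by blast
    finally show "a y j < a x j \<longleftrightarrow> dd m j x < dd m j y" .
  qed
  show ?thesis unfolding maximal_def
  proof (intro allI impI)
    fix \<pi> :: "nat \<Rightarrow> nat" assume h: "\<pi> permutes {1..m} \<and> fixpts m \<pi> \<noteq> {}"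
    show "2 * card {\<gamma>\<in>EC m a \<pi>. nash_eq m U \<gamma>} = card (EC m a \<pi>)"
      using main_count[of \<pi> m a U] h ha hdist hlam0 ord by blast
  qed
qed

end
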